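(* Let $\mu$ be a single-group classification problem, $f^*(x)=\mathbb E_\mu[Y\mid X=x]$, $r^*:=f^*\sharp\mu^X$, and fix $q\in\mathcal Q_k$. (i) For every randomized classifier $h:\mathcal X\to\mathcal Y$ with Markov kernel $K$ and $h\sharp\mu^X=q$, the measure $\gamma$ on $\Delta_k\times\mathcal Y$ defined by $\gamma(B\times\{y\})=\int_{(f^* )^{-1}(B)}K(x,\{y\})\,d\mu^X(x)$ belongs to $\Gamma(r^*,q)$ and $$\mathrm{Err}(h)=\frac12\int_{\Delta_k\times\mathcal Y}\|s-y\|_1\,d\gamma(s,y).$$ (ii) Conversely, for every $\gamma\in\Gamma(r^*,q)$, letting $\gamma(\cdot\mid s)$ denote a regular conditional distribution (disintegration) of $\gamma$ with respect to its first marginal, the randomized classifier $h$ with kernel $K(x,B)=\gamma(B\mid f^*(x))$ satisfies $h\sharp\mu^X=q$ and $\mathrm{Err}(h)=\frac12\int_{\Delta_k\times\mathcal Y}\|s-y\|_1\,d\gamma(s,y)$.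
   Context: Single-group setting. $\mathcal X$ is a standard Borel space, $k\ge2$, $\mathcal Y=\{e_1,\dots,e_k\}\subset\mathbb R^k$ the standard basis vectors, $\Delta_k=\{x\in\mathbb R^k:x\ge0,\sum_ix_i=1\}$. $\mu$ is a probability distribution of $(X,Y)$ on $\mathcal X\times\mathcal Y$, $\mu^X$ the law of $X$, and $f^*(x)=\mathbb E_\mu[Y\mid X=x]\in\Delta_k$ is the Bayes regressor. A randomized classifier $h:\mathcal X\to\mathcal Y$ is given by a Markov kernel $K$ with $\mathbb P(h(x)\in B)=K(x,B)$, its randomness independent of $(X,Y)$; $h\sharp\mu^X(B)=\int K(x,B)\,d\mu^X(x)$, $f^*\sharp\mu^X$ is the law of $f^*(X)$, and $\mathrm{Err}(h)=\mathbb P(h(X)\neq Y)$. $\mathcal Q_k$ is the set of probability distributions supported on $\mathcal Y$, and $\Gamma(p,q)$ the set of couplings of $p$ and $q$. *)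

theory Defs
  imports "HOL-Probability.Probability"
begin

text \<open>Labels: the finite type 'k indexes the standard basis vectors e_i of R^k.\<close>

definition onehot :: "'k::finite \<Rightarrow> real^'k" where
  "onehot i = axis i 1"

definition prob_simplex :: "(real^'k::finite) set" where
  "prob_simplex = {s. (\<forall>i. 0 \<le> s $ i) \<and> (\<Sum>i\<in>UNIV. s $ i) = 1}"

definition l1dist :: "real^'k::finite \<Rightarrow> real^'k \<Rightarrow> real" where
  "l1dist s y = (\<Sum>i\<in>UNIV. \<bar>s $ i - y $ i\<bar>)"

text \<open>Markov kernel from X to the finite label set: K x j = K(x,{e_j}).\<close>
definition markov_kernel_fin :: "'x measure \<Rightarrow> ('x \<Rightarrow> 'k::finite \<Rightarrow> real) \<Rightarrow> bool" where
  "markov_kernel_fin M K \<longleftrightarrow>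
     (\<forall>j. (\<lambda>x. K x j) \<in> borel_measurable M) \<and>
     (\<forall>x j. 0 \<le> K x j) \<and> (\<forall>x. (\<Sum>j\<in>UNIV. K x j) = 1)"

definition pushforward_eq :: "'x measure \<Rightarrow> ('x \<Rightarrow> 'k::finite \<Rightarrow> real) \<Rightarrow> 'k pmf \<Rightarrow> bool" where
  "pushforward_eq MX K q \<longleftrightarrow> (\<forall>j. (\<integral>x. K x j \<partial>MX) = pmf q j)"

text \<open>Err(h) = P(h(X) \<noteq> Y), with the randomness of h independent of (X,Y).\<close>
definition err :: "('x \<times> 'k::finite) measure \<Rightarrow> ('x \<Rightarrow> 'k \<Rightarrow> real) \<Rightarrow> real" where
  "err \<mu> K = (\<integral>(x,y). (\<Sum>j\<in>UNIV - {y}. K x j) \<partial>\<mu>)"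

definition couplings :: "'a measure \<Rightarrow> 'b measure \<Rightarrow> ('a \<times> 'b) measure set" where
  "couplings p q = {\<gamma>. sets \<gamma> = sets (p \<Otimes>\<^sub>M q) \<and>
                       distr \<gamma> p fst = p \<and> distr \<gamma> q snd = q}"

definition half_l1_cost :: "((real^'k::finite) \<times> 'k) measure \<Rightarrow> real" where
  "half_l1_cost \<gamma> = (1/2) * (\<integral>(s,j). l1dist s (onehot j) \<partial>\<gamma>)"

end

theory Submission
  imports Defs
begin


lemma slice_nn:
  fixes M :: "('a::topological_space \<times> 'b) measure" and \<nu> :: "'a measure"
  assumes sM: "sets M = sets (borel \<Otimes>\<^sub>M count_space UNIV)" and sN: "sets \<nu> = sets borel"
    and eq: "\<forall>B\<in>sets borel. emeasure M (B \<times> {y}) = emeasure \<nu> B"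
    and g: "g \<in> borel_measurable borel"
  shows "(\<integral>\<^sup>+z. g (fst z) * indicator {y} (snd z) \<partial>M) = (\<integral>\<^sup>+s. g s \<partial>\<nu>)"
proof -
  have spM: "space M = UNIV" using sets_eq_imp_space_eq[OF sM] by (simp add: space_pair_measure)
  have fm: "fst \<in> M \<rightarrow>\<^sub>M borel" unfolding measurable_cong_sets[OF sM refl] by simp
  have sm: "snd \<in> M \<rightarrow>\<^sub>M count_space UNIV" unfolding measurable_cong_sets[OF sM refl] by simp
  have im: "(\<lambda>z. indicator {y} (snd z) :: ennreal) \<in> borel_measurable M"
    using measurable_compose[OF sm, of "indicator {y}" borel] by simp
  define D where "D = density M (\<lambda>z. indicator {y} (snd z))"
  have "distr D borel fst = \<nu>"
  proof (rule measure_eqI)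
    show "sets (distr D borel fst) = sets \<nu>" using sN by simp
    fix A assume "A \<in> sets (distr D borel fst)"
    then have A: "A \<in> sets borel" by simp
    have fD: "fst \<in> D \<rightarrow>\<^sub>M borel" unfolding D_def using fm by simp
    have fA: "fst -` A \<in> sets M" using measurable_sets[OF fm A] spM by simp
    have "emeasure (distr D borel fst) A = emeasure D (fst -` A \<inter> space D)"
      by (rule emeasure_distr[OF fD A])
    also have "\<dots> = (\<integral>\<^sup>+z. indicator {y} (snd z) * indicator (fst -` A) z \<partial>M)"
      unfolding D_def using fA spM by (subst emeasure_density) (auto simp: im)
    also have "\<dots> = (\<integral>\<^sup>+z. indicator (A \<times> {y}) z \<partial>M)"
      by (rule nn_integral_cong) (auto simp: indicator_def)
    also have "\<dots> = emeasure M (A \<times> {y})"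
      using A sM by (intro nn_integral_indicator) simp
    also have "\<dots> = emeasure \<nu> A" using eq A by simp
    finally show "emeasure (distr D borel fst) A = emeasure \<nu> A" .
  qed
  then have "(\<integral>\<^sup>+s. g s \<partial>\<nu>) = (\<integral>\<^sup>+s. g s \<partial>distr D borel fst)" by simp
  also have "\<dots> = (\<integral>\<^sup>+z. g (fst z) \<partial>D)"
    using fm g unfolding D_def by (intro nn_integral_distr) auto
  also have "\<dots> = (\<integral>\<^sup>+z. indicator {y} (snd z) * g (fst z) \<partial>M)"
    unfolding D_def using g fm im by (intro nn_integral_density) auto
  finally show ?thesis by (simp add: mult.commute)
qed



lemma sum_ind:
  fixes F :: "'k::finite \<Rightarrow> 'a::comm_semiring_1"
  shows "(\<Sum>y\<in>UNIV. F y * indicator {y} c) = F c"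
proof -
  have "(\<Sum>y\<in>UNIV. F y * indicator {y} c) = (\<Sum>y\<in>UNIV. if y = c then F y else 0)"
    by (rule sum.cong) (auto simp: indicator_def)
  also have "\<dots> = F c" by simp
  finally show ?thesis .
qed

lemma l1_onehot:
  fixes s :: "real^'k::finite"
  assumes "s \<in> prob_simplex"
  shows "l1dist s (onehot y) = 2 * (\<Sum>i\<in>UNIV-{y}. s$i)"
proof -
  have nn: "\<And>i. 0 \<le> s$i" and one: "(\<Sum>i\<in>UNIV. s$i) = 1" using assms by (auto simp: prob_simplex_def)
  have split: "(\<Sum>i\<in>UNIV. s$i) = s$y + (\<Sum>i\<in>UNIV-{y}. s$i)"
    by (simp add: sum.remove)
  have rest: "(\<Sum>i\<in>UNIV-{y}. s$i) \<ge> 0" using nn by (simp add: sum_nonneg)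
  have "l1dist s (onehot y) = (\<Sum>i\<in>UNIV. \<bar>s$i - (if i = y then 1 else 0)\<bar>)"
    unfolding l1dist_def onehot_def by (rule sum.cong) (auto simp: axis_def)
  also have "\<dots> = \<bar>s$y - 1\<bar> + (\<Sum>i\<in>UNIV-{y}. \<bar>s$i - (if i = y then 1 else 0)\<bar>)"
    by (subst sum.remove[of UNIV y]) auto
  also have "(\<Sum>i\<in>UNIV-{y}. \<bar>s$i - (if i = y then 1 else 0)\<bar>) = (\<Sum>i\<in>UNIV-{y}. s$i)"
    using nn by (intro sum.cong) auto
  finally show ?thesis using split one rest by (simp add: abs_if)
qed

lemma swap_lemma:
  fixes K f :: "'k::finite \<Rightarrow> real"
  shows "(\<Sum>y\<in>UNIV. K y * (2 * (\<Sum>i\<in>UNIV-{y}. f i))) = 2 * (\<Sum>i\<in>UNIV. f i * (\<Sum>j\<in>UNIV-{i}. K j))"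
proof -
  have a: "\<And>g::'k\<Rightarrow>real. \<And>y. (\<Sum>i\<in>UNIV-{y}. g i) = (\<Sum>i\<in>UNIV. g i) - g y"
    by (simp add: sum_diff1)
  have "(\<Sum>y\<in>UNIV. K y * (2 * (\<Sum>i\<in>UNIV-{y}. f i))) = 2 * ((\<Sum>y\<in>UNIV. \<Sum>i\<in>UNIV. K y * f i) - (\<Sum>y\<in>UNIV. K y * f y))"
    by (simp add: a sum_distrib_left sum_distrib_right sum_subtractf algebra_simps)
  also have "(\<Sum>y\<in>UNIV. \<Sum>i\<in>UNIV. K y * f i) = (\<Sum>i\<in>UNIV. \<Sum>y\<in>UNIV. K y * f i)"
    by (rule sum.swap)
  also have "2 * ((\<Sum>i\<in>UNIV. \<Sum>y\<in>UNIV. K y * f i) - (\<Sum>y\<in>UNIV. K y * f y)) = 2 * (\<Sum>i\<in>UNIV. f i * (\<Sum>j\<in>UNIV-{i}. K j))"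
    by (simp add: a sum_distrib_left sum_subtractf algebra_simps)
  finally show ?thesis .
qed



lemma main:
  fixes \<mu> :: "('x::polish_space \<times> 'k::finite) measure"
    and fstar :: "'x \<Rightarrow> real^'k" and K :: "'x \<Rightarrow> 'k \<Rightarrow> real"
    and \<gamma> :: "((real^'k) \<times> 'k) measure"
  assumes prob: "prob_space \<mu>"
    and sets_mu: "sets \<mu> = sets (borel \<Otimes>\<^sub>M count_space UNIV)"
    and fstar_meas: "fstar \<in> borel_measurable (distr \<mu> borel fst)"
    and fstar_simplex: "\<forall>x. fstar x \<in> prob_simplex"
    and fstar_condexp: "\<forall>A\<in>sets borel. \<forall>i.
          (\<integral>x. indicator A x * fstar x $ i \<partial>(distr \<mu> borel fst)) = measure \<mu> (A \<times> {i})"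
    and mk: "markov_kernel_fin (distr \<mu> borel fst) K"
    and sg: "sets \<gamma> = sets (borel \<Otimes>\<^sub>M count_space UNIV)"
    and rect: "\<forall>B\<in>sets borel. \<forall>y. emeasure \<gamma> (B \<times> {y}) =
                  ennreal (\<integral>x. indicator (fstar -` B) x * K x y \<partial>(distr \<mu> borel fst))"
  shows "distr \<gamma> (distr (distr \<mu> borel fst) borel fstar) fst = distr (distr \<mu> borel fst) borel fstar"
    and "\<forall>j. emeasure \<gamma> (UNIV \<times> {j}) = ennreal (\<integral>x. K x j \<partial>(distr \<mu> borel fst))"
    and "err \<mu> K = half_l1_cost \<gamma>"
proof -
  define MX where "MX = distr \<mu> borel fst"
  interpret mu: prob_space \<mu> by (rule prob)
  have spmu: "space \<mu> = UNIV" using sets_eq_imp_space_eq[OF sets_mu] by (simp add: space_pair_measure)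
  have spg: "space \<gamma> = UNIV" using sets_eq_imp_space_eq[OF sg] by (simp add: space_pair_measure)
  have fmu: "fst \<in> \<mu> \<rightarrow>\<^sub>M borel" unfolding measurable_cong_sets[OF sets_mu refl] by simp
  have smu: "snd \<in> \<mu> \<rightarrow>\<^sub>M count_space UNIV" unfolding measurable_cong_sets[OF sets_mu refl] by simp
  have fg: "fst \<in> \<gamma> \<rightarrow>\<^sub>M borel" unfolding measurable_cong_sets[OF sg refl] by simp
  have sng: "snd \<in> \<gamma> \<rightarrow>\<^sub>M count_space UNIV" unfolding measurable_cong_sets[OF sg refl] by simp
  interpret MX: prob_space MX unfolding MX_def by (rule mu.prob_space_distr[OF fmu])
  have spMX: "space MX = UNIV" unfolding MX_def by simp
  have setsMX: "sets MX = sets borel" unfolding MX_def by simp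
  have fsm: "fstar \<in> borel_measurable MX" using fstar_meas unfolding MX_def .
  have Km: "\<And>y. (\<lambda>x. K x y) \<in> borel_measurable MX" using mk unfolding markov_kernel_fin_def MX_def by auto
  have K0: "\<And>x y. 0 \<le> K x y" using mk unfolding markov_kernel_fin_def by auto
  have K1: "\<And>x. (\<Sum>j\<in>UNIV. K x j) = 1" using mk unfolding markov_kernel_fin_def by auto
  have Kle: "\<And>x y. K x y \<le> 1"
  proof -
    fix x y have "K x y \<le> (\<Sum>j\<in>UNIV. K x j)" by (rule member_le_sum) (auto simp: K0)
    then show "K x y \<le> 1" using K1 by simp
  qed
  have fim: "\<And>i. (\<lambda>x. fstar x $ i) \<in> borel_measurable MX"
    using measurable_compose[OF fsm borel_measurable_nth] by simp
  have f0: "\<And>x i. 0 \<le> fstar x $ i" using fstar_simplex by (auto simp: prob_simplex_def)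
  have f1: "\<And>x. (\<Sum>i\<in>UNIV. fstar x $ i) = 1" using fstar_simplex by (auto simp: prob_simplex_def)
  have fle: "\<And>x i. fstar x $ i \<le> 1"
  proof -
    fix x i have "fstar x $ i \<le> (\<Sum>j\<in>UNIV. fstar x $ j)" by (rule member_le_sum) (auto simp: f0)
    then show "fstar x $ i \<le> 1" using f1 by simp
  qed
  have G: "\<And>y g. g \<in> borel_measurable borel \<Longrightarrow>
      (\<integral>\<^sup>+z. g (fst z) * indicator {y} (snd z) \<partial>\<gamma>) = (\<integral>\<^sup>+x. ennreal (K x y) * g (fstar x) \<partial>MX)"
  proof -
    fix y and g :: "real^'k \<Rightarrow> ennreal" assume g: "g \<in> borel_measurable borel"
    define \<nu> where "\<nu> = distr (density MX (\<lambda>x. ennreal (K x y))) borel fstar"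
    have fsd: "fstar \<in> density MX (\<lambda>x. ennreal (K x y)) \<rightarrow>\<^sub>M borel" using fsm by simp
    have "\<forall>B\<in>sets borel. emeasure \<gamma> (B \<times> {y}) = emeasure \<nu> B"
    proof
      fix B :: "(real^'k) set" assume B: "B \<in> sets borel"
      have pre: "fstar -` B \<in> sets MX" using measurable_sets[OF fsm B] spMX by simp
      have "emeasure \<nu> B = emeasure (density MX (\<lambda>x. ennreal (K x y))) (fstar -` B)"
        unfolding \<nu>_def using emeasure_distr[OF fsd B] spMX by simp
      also have "\<dots> = (\<integral>\<^sup>+x. ennreal (K x y) * indicator (fstar -` B) x \<partial>MX)"
        using pre Km by (subst emeasure_density) auto
      also have "\<dots> = (\<integral>\<^sup>+x. ennreal (indicator (fstar -` B) x * K x y) \<partial>MX)"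
        by (rule nn_integral_cong) (auto simp: indicator_def)
      also have "\<dots> = ennreal (\<integral>x. indicator (fstar -` B) x * K x y \<partial>MX)"
      proof (rule nn_integral_eq_integral)
        have im: "(\<lambda>x. indicator (fstar -` B) x :: real) \<in> borel_measurable MX"
          using borel_measurable_indicator[OF pre] by simp
        show "integrable MX (\<lambda>x. indicator (fstar -` B) x * K x y)"
        proof (rule MX.integrable_const_bound[where B=1])
          show "AE x in MX. norm (indicator (fstar -` B) x * K x y) \<le> 1"
            by (auto simp: indicator_def K0 Kle)
        qed (rule borel_measurable_times[OF im Km])
      qed (auto simp: K0)
      also have "\<dots> = emeasure \<gamma> (B \<times> {y})" using rect B unfolding MX_def by simp
      finally show "emeasure \<gamma> (B \<times> {y}) = emeasure \<nu> B" by simp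
    qed
    then have "(\<integral>\<^sup>+z. g (fst z) * indicator {y} (snd z) \<partial>\<gamma>) = (\<integral>\<^sup>+s. g s \<partial>\<nu>)"
      by (intro slice_nn[OF sg _ _ g]) (simp_all add: \<nu>_def)
    also have "\<dots> = (\<integral>\<^sup>+x. g (fstar x) \<partial>density MX (\<lambda>x. ennreal (K x y)))"
      unfolding \<nu>_def using fsd g by (intro nn_integral_distr) auto
    also have "\<dots> = (\<integral>\<^sup>+x. ennreal (K x y) * g (fstar x) \<partial>MX)"
      using Km g fsm by (intro nn_integral_density) auto
    finally show "(\<integral>\<^sup>+z. g (fst z) * indicator {y} (snd z) \<partial>\<gamma>) = (\<integral>\<^sup>+x. ennreal (K x y) * g (fstar x) \<partial>MX)" .
  qed
  have sumK: "\<And>x. (\<Sum>y\<in>UNIV. ennreal (K x y)) = 1"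
    using K1 K0 by (simp add: sum_ennreal)
  show "distr \<gamma> (distr (distr \<mu> borel fst) borel fstar) fst = distr (distr \<mu> borel fst) borel fstar"
    unfolding MX_def[symmetric]
  proof (rule measure_eqI)
    show "sets (distr \<gamma> (distr MX borel fstar) fst) = sets (distr MX borel fstar)" by simp
    fix B assume "B \<in> sets (distr \<gamma> (distr MX borel fstar) fst)"
    then have B: "B \<in> sets borel" by simp
    have fg': "fst \<in> \<gamma> \<rightarrow>\<^sub>M distr MX borel fstar"
      using fg measurable_cong_sets[OF refl, of "distr MX borel fstar" borel \<gamma>] by simp
    have pre: "fst -` B \<in> sets \<gamma>" using measurable_sets[OF fg B] spg by simp
    have ib: "indicator B \<in> borel_measurable borel" using B by simp
    have "emeasure (distr \<gamma> (distr MX borel fstar) fst) B = emeasure \<gamma> (fst -` B)"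
      using emeasure_distr[OF fg'] B spg by simp
    also have "\<dots> = (\<integral>\<^sup>+z. indicator (fst -` B) z \<partial>\<gamma>)"
      using pre by simp
    also have "\<dots> = (\<integral>\<^sup>+z. (\<Sum>y\<in>UNIV. indicator B (fst z) * indicator {y} (snd z)) \<partial>\<gamma>)"
    proof (rule nn_integral_cong)
      fix z :: "(real^'k) \<times> 'k"
      show "indicator (fst -` B) z = (\<Sum>y\<in>UNIV. indicator B (fst z) * indicator {y} (snd z) :: ennreal)"
        using sum_ind[where F="\<lambda>_. indicator B (fst z) :: ennreal" and c="snd z"] by (simp add: indicator_def)
    qed
    also have "\<dots> = (\<Sum>y\<in>UNIV. \<integral>\<^sup>+z. indicator B (fst z) * indicator {y} (snd z) \<partial>\<gamma>)"
      using B fg sng by (intro nn_integral_sum) auto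
    also have "\<dots> = (\<Sum>y\<in>UNIV. \<integral>\<^sup>+x. ennreal (K x y) * indicator B (fstar x) \<partial>MX)"
      using G[OF ib] by simp
    also have "\<dots> = (\<integral>\<^sup>+x. (\<Sum>y\<in>UNIV. ennreal (K x y) * indicator B (fstar x)) \<partial>MX)"
      using B fsm Km by (intro nn_integral_sum[symmetric]) auto
    also have "\<dots> = (\<integral>\<^sup>+x. indicator (fstar -` B) x \<partial>MX)"
      by (rule nn_integral_cong) (simp add: sum_distrib_right[symmetric] sumK indicator_def)
    also have "\<dots> = emeasure MX (fstar -` B)"
      using measurable_sets[OF fsm B] spMX by simp
    also have "\<dots> = emeasure (distr MX borel fstar) B"
      using emeasure_distr[OF fsm B] spMX by simp
    finally show "emeasure (distr \<gamma> (distr MX borel fstar) fst) B = emeasure (distr MX borel fstar) B" .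
  qed
  show "\<forall>j. emeasure \<gamma> (UNIV \<times> {j}) = ennreal (\<integral>x. K x j \<partial>(distr \<mu> borel fst))"
    using rect by simp
  have Kb: "\<And>y. (\<lambda>x. K x y) \<in> borel_measurable borel"
    using Km measurable_cong_sets[OF setsMX refl] by auto
  have fib: "\<And>i. (\<lambda>x. fstar x $ i) \<in> borel_measurable borel"
    using fim measurable_cong_sets[OF setsMX refl] by auto
  have fsb: "fstar \<in> borel_measurable borel"
    using fsm measurable_cong_sets[OF setsMX refl] by auto
  define a where "a i x = (\<Sum>j\<in>UNIV-{i}. K x j)" for i x
  define E where "E x = (\<Sum>i\<in>UNIV. fstar x $ i * a i x)" for x
  have a0: "\<And>i x. 0 \<le> a i x" unfolding a_def by (simp add: K0 sum_nonneg)
  have E0: "\<And>x. 0 \<le> E x" unfolding E_def by (simp add: a0 f0 sum_nonneg)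
  have ab: "\<And>i. a i \<in> borel_measurable borel" unfolding a_def using Kb by measurable
  have aM: "\<And>i. a i \<in> borel_measurable MX" unfolding a_def using Km by measurable
  have Eb: "E \<in> borel_measurable borel" unfolding E_def using ab fib by measurable
  have EM: "E \<in> borel_measurable MX" using Eb measurable_cong_sets[OF setsMX refl] by auto
  have C: "\<And>i g. g \<in> borel_measurable borel \<Longrightarrow>
      (\<integral>\<^sup>+z. g (fst z) * indicator {i} (snd z) \<partial>\<mu>) = (\<integral>\<^sup>+x. ennreal (fstar x $ i) * g x \<partial>MX)"
  proof -
    fix i and g :: "'x \<Rightarrow> ennreal" assume g: "g \<in> borel_measurable borel"
    have gM: "g \<in> borel_measurable MX" using g measurable_cong_sets[OF setsMX refl] by auto
    define \<nu> where "\<nu> = density MX (\<lambda>x. ennreal (fstar x $ i))"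
    have "\<forall>A\<in>sets borel. emeasure \<mu> (A \<times> {i}) = emeasure \<nu> A"
    proof
      fix A :: "'x set" assume A: "A \<in> sets borel"
      have AM: "A \<in> sets MX" using A setsMX by simp
      have im: "(\<lambda>x. indicator A x :: real) \<in> borel_measurable MX"
        using borel_measurable_indicator[OF AM] by simp
      have "emeasure \<nu> A = (\<integral>\<^sup>+x. ennreal (fstar x $ i) * indicator A x \<partial>MX)"
        unfolding \<nu>_def using AM fim by (subst emeasure_density) auto
      also have "\<dots> = (\<integral>\<^sup>+x. ennreal (indicator A x * fstar x $ i) \<partial>MX)"
        by (rule nn_integral_cong) (auto simp: indicator_def)
      also have "\<dots> = ennreal (\<integral>x. indicator A x * fstar x $ i \<partial>MX)"
      proof (rule nn_integral_eq_integral)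
        show "integrable MX (\<lambda>x. indicator A x * fstar x $ i)"
        proof (rule MX.integrable_const_bound[where B=1])
          show "AE x in MX. norm (indicator A x * fstar x $ i) \<le> 1"
            by (auto simp: indicator_def f0 fle)
        qed (rule borel_measurable_times[OF im fim])
      qed (auto simp: f0)
      also have "\<dots> = ennreal (measure \<mu> (A \<times> {i}))" using fstar_condexp A unfolding MX_def by simp
      also have "\<dots> = emeasure \<mu> (A \<times> {i})" using A sets_mu by (simp add: mu.emeasure_eq_measure)
      finally show "emeasure \<mu> (A \<times> {i}) = emeasure \<nu> A" by simp
    qed
    then have "(\<integral>\<^sup>+z. g (fst z) * indicator {i} (snd z) \<partial>\<mu>) = (\<integral>\<^sup>+s. g s \<partial>\<nu>)"
      by (intro slice_nn[OF sets_mu _ _ g]) (simp_all add: \<nu>_def setsMX)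
    also have "\<dots> = (\<integral>\<^sup>+x. ennreal (fstar x $ i) * g x \<partial>MX)"
      unfolding \<nu>_def using fim gM by (intro nn_integral_density) auto
    finally show "(\<integral>\<^sup>+z. g (fst z) * indicator {i} (snd z) \<partial>\<mu>) = (\<integral>\<^sup>+x. ennreal (fstar x $ i) * g x \<partial>MX)" .
  qed
  define I where "I = (\<integral>\<^sup>+x. ennreal (E x) \<partial>MX)"
  have errI: "err \<mu> K = enn2real I"
  proof -
    have eqf: "(\<lambda>(x,y). \<Sum>j\<in>UNIV - {y}. K x j) = (\<lambda>z. (\<lambda>i z. a i (fst z)) (snd z) z)"
      by (auto simp: a_def)
    have ms: "(\<lambda>z. (\<lambda>i z. a i (fst z)) (snd z) z) \<in> borel_measurable \<mu>"
      by (rule measurable_compose_countable'[OF _ smu]) (auto intro: measurable_compose[OF fmu ab])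
    have "err \<mu> K = enn2real (\<integral>\<^sup>+z. ennreal (a (snd z) (fst z)) \<partial>\<mu>)"
      unfolding err_def eqf using ms by (subst integral_eq_nn_integral) (auto simp: a0)
    also have "(\<integral>\<^sup>+z. ennreal (a (snd z) (fst z)) \<partial>\<mu>) = (\<integral>\<^sup>+z. (\<Sum>i\<in>UNIV. ennreal (a i (fst z)) * indicator {i} (snd z)) \<partial>\<mu>)"
      by (rule nn_integral_cong) (simp add: sum_ind)
    also have "\<dots> = (\<Sum>i\<in>UNIV. \<integral>\<^sup>+z. ennreal (a i (fst z)) * indicator {i} (snd z) \<partial>\<mu>)"
      using ab fmu smu by (intro nn_integral_sum) auto
    also have "\<dots> = (\<Sum>i\<in>UNIV. \<integral>\<^sup>+x. ennreal (fstar x $ i) * ennreal (a i x) \<partial>MX)"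
    proof (rule sum.cong[OF refl])
      fix i :: 'k
      have "(\<lambda>x. ennreal (a i x)) \<in> borel_measurable borel" using ab by simp
      then show "(\<integral>\<^sup>+z. ennreal (a i (fst z)) * indicator {i} (snd z) \<partial>\<mu>) = (\<integral>\<^sup>+x. ennreal (fstar x $ i) * ennreal (a i x) \<partial>MX)"
        using C[of "\<lambda>x. ennreal (a i x)" i] by simp
    qed
    also have "\<dots> = (\<integral>\<^sup>+x. (\<Sum>i\<in>UNIV. ennreal (fstar x $ i) * ennreal (a i x)) \<partial>MX)"
      using aM fim by (intro nn_integral_sum[symmetric]) auto
    also have "\<dots> = I"
      unfolding I_def E_def
      by (rule nn_integral_cong) (simp add: ennreal_mult[symmetric] f0 a0 sum_ennreal mult_nonneg_nonneg)
    finally show ?thesis .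
  qed
  have l1b: "\<And>c. (\<lambda>s. l1dist s c) \<in> borel_measurable borel"
    unfolding l1dist_def by measurable
  have costI: "half_l1_cost \<gamma> = enn2real I"
  proof -
    have eqf: "(\<lambda>(s,j). l1dist s (onehot j)) = (\<lambda>z. (\<lambda>j z. l1dist (fst z) (onehot j)) (snd z) z)"
      by auto
    have ms: "(\<lambda>z. (\<lambda>j z. l1dist (fst z) (onehot j)) (snd z) z) \<in> borel_measurable \<gamma>"
      by (rule measurable_compose_countable'[OF _ sng]) (auto intro: measurable_compose[OF fg l1b])
    have l0: "\<And>s c. 0 \<le> l1dist s c" unfolding l1dist_def by (simp add: sum_nonneg)
    have "half_l1_cost \<gamma> = 1/2 * enn2real (\<integral>\<^sup>+z. ennreal (l1dist (fst z) (onehot (snd z))) \<partial>\<gamma>)"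
      unfolding half_l1_cost_def eqf using ms by (subst integral_eq_nn_integral) (auto simp: l0)
    also have "(\<integral>\<^sup>+z. ennreal (l1dist (fst z) (onehot (snd z))) \<partial>\<gamma>) = (\<integral>\<^sup>+z. (\<Sum>y\<in>UNIV. ennreal (l1dist (fst z) (onehot y)) * indicator {y} (snd z)) \<partial>\<gamma>)"
      by (rule nn_integral_cong) (simp add: sum_ind)
    also have "\<dots> = (\<Sum>y\<in>UNIV. \<integral>\<^sup>+z. ennreal (l1dist (fst z) (onehot y)) * indicator {y} (snd z) \<partial>\<gamma>)"
      using measurable_compose[OF fg l1b] sng by (intro nn_integral_sum) auto
    also have "\<dots> = (\<Sum>y\<in>UNIV. \<integral>\<^sup>+x. ennreal (K x y) * ennreal (l1dist (fstar x) (onehot y)) \<partial>MX)"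
    proof (rule sum.cong[OF refl])
      fix y :: 'k
      have "(\<lambda>s. ennreal (l1dist s (onehot y))) \<in> borel_measurable borel"
        using l1b[of "onehot y"] by measurable
      then show "(\<integral>\<^sup>+z. ennreal (l1dist (fst z) (onehot y)) * indicator {y} (snd z) \<partial>\<gamma>) = (\<integral>\<^sup>+x. ennreal (K x y) * ennreal (l1dist (fstar x) (onehot y)) \<partial>MX)"
        using G[of "\<lambda>s. ennreal (l1dist s (onehot y))" y] by simp
    qed
    also have "\<dots> = (\<integral>\<^sup>+x. (\<Sum>y\<in>UNIV. ennreal (K x y) * ennreal (l1dist (fstar x) (onehot y))) \<partial>MX)"
      using Km measurable_compose[OF fsm l1b] by (intro nn_integral_sum[symmetric]) auto
    also have "\<dots> = (\<integral>\<^sup>+x. 2 * ennreal (E x) \<partial>MX)"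
    proof (rule nn_integral_cong)
      fix x
      have "(\<Sum>y\<in>UNIV. ennreal (K x y) * ennreal (l1dist (fstar x) (onehot y)))
          = ennreal (\<Sum>y\<in>UNIV. K x y * l1dist (fstar x) (onehot y))"
        by (simp add: ennreal_mult[symmetric] K0 l0 sum_ennreal)
      also have "(\<Sum>y\<in>UNIV. K x y * l1dist (fstar x) (onehot y)) = 2 * E x"
        using swap_lemma[of "\<lambda>y. K x y" "\<lambda>i. fstar x $ i"] fstar_simplex
        by (simp add: l1_onehot E_def a_def)
      also have "ennreal (2 * E x) = 2 * ennreal (E x)" by (simp add: ennreal_mult E0)
      finally show "(\<Sum>y\<in>UNIV. ennreal (K x y) * ennreal (l1dist (fstar x) (onehot y))) = 2 * ennreal (E x)" .
    qed
    also have "\<dots> = 2 * I" unfolding I_def using EM by (intro nn_integral_cmult) auto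
    finally show ?thesis by (simp add: enn2real_mult)
  qed
  show "err \<mu> K = half_l1_cost \<gamma>" using errI costI by simp
qed



lemma snd_marg:
  fixes \<gamma> :: "('a::topological_space \<times> 'k::finite) measure"
  assumes sg: "sets \<gamma> = sets (borel \<Otimes>\<^sub>M count_space UNIV)"
    and m: "\<forall>j. emeasure \<gamma> (UNIV \<times> {j}) = ennreal (pmf q j)"
  shows "distr \<gamma> (measure_pmf q) snd = measure_pmf q"
proof (rule measure_eqI)
  show "sets (distr \<gamma> (measure_pmf q) snd) = sets (measure_pmf q)" by simp
  fix A assume "A \<in> sets (distr \<gamma> (measure_pmf q) snd)"
  have spg: "space \<gamma> = UNIV" using sets_eq_imp_space_eq[OF sg] by (simp add: space_pair_measure)
  have sng: "snd \<in> \<gamma> \<rightarrow>\<^sub>M measure_pmf q"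
    unfolding measurable_cong_sets[OF sg sets_measure_pmf_count_space] by simp
  have "emeasure (distr \<gamma> (measure_pmf q) snd) A = emeasure \<gamma> (snd -` A)"
    using emeasure_distr[OF sng] spg by simp
  also have "snd -` A = (\<Union>j\<in>A. UNIV \<times> {j})" by auto
  also have "emeasure \<gamma> (\<Union>j\<in>A. UNIV \<times> {j}) = (\<Sum>j\<in>A. emeasure \<gamma> (UNIV \<times> {j}))"
    by (rule sum_emeasure[symmetric]) (auto simp: sg disjoint_family_on_def)
  also have "\<dots> = (\<Sum>j\<in>A. ennreal (pmf q j))" using m by simp
  also have "\<dots> = emeasure (measure_pmf q) A"
    by (simp add: emeasure_measure_pmf_finite sum_ennreal)
  finally show "emeasure (distr \<gamma> (measure_pmf q) snd) A = emeasure (measure_pmf q) A" .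
qed

lemma exists_gamma:
  fixes MX :: "'x::polish_space measure" and fstar :: "'x \<Rightarrow> real^'k::finite"
    and K :: "'x \<Rightarrow> 'k \<Rightarrow> real"
  assumes prob: "prob_space MX" and setsMX: "sets MX = sets borel"
    and fsm: "fstar \<in> borel_measurable MX"
    and mk: "markov_kernel_fin MX K"
  shows "\<exists>\<gamma>. sets \<gamma> = sets (borel \<Otimes>\<^sub>M count_space UNIV) \<and>
              (\<forall>B\<in>sets borel. \<forall>y. emeasure \<gamma> (B \<times> {y}) =
                  ennreal (\<integral>x. indicator (fstar -` B) x * K x y \<partial>MX))"
proof -
  interpret MX: prob_space MX by (rule prob)
  have spMX: "space MX = UNIV" using sets_eq_imp_space_eq[OF setsMX] by simp
  have Km: "\<And>y. (\<lambda>x. K x y) \<in> borel_measurable MX" using mk unfolding markov_kernel_fin_def by auto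
  have K0: "\<And>x y. 0 \<le> K x y" using mk unfolding markov_kernel_fin_def by auto
  have K1: "\<And>x. (\<Sum>j\<in>UNIV. K x j) = 1" using mk unfolding markov_kernel_fin_def by auto
  have Kle: "\<And>x y. K x y \<le> 1"
  proof -
    fix x y have "K x y \<le> (\<Sum>j\<in>UNIV. K x j)" by (rule member_le_sum) (auto simp: K0)
    then show "K x y \<le> 1" using K1 by simp
  qed
  define P where "P = (MX \<Otimes>\<^sub>M count_space (UNIV::'k set))"
  have spP: "space P = UNIV" unfolding P_def by (simp add: space_pair_measure spMX)
  have dm: "(\<lambda>z. ennreal (K (fst z) (snd z))) \<in> borel_measurable P"
    unfolding P_def
    by (rule measurable_compose_countable'[where f="\<lambda>i z. ennreal (K (fst z) i)", OF _ measurable_snd])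
       (use Km in measurable)
  define D where "D = density P (\<lambda>z. ennreal (K (fst z) (snd z)))"
  have Tm: "(\<lambda>z. (fstar (fst z), snd z)) \<in> D \<rightarrow>\<^sub>M (borel \<Otimes>\<^sub>M count_space UNIV)"
    unfolding D_def P_def using fsm by simp
  define \<gamma> where "\<gamma> = distr D (borel \<Otimes>\<^sub>M count_space UNIV) (\<lambda>z. (fstar (fst z), snd z))"
  have "sets \<gamma> = sets (borel \<Otimes>\<^sub>M count_space UNIV)" unfolding \<gamma>_def by simp
  moreover have "\<forall>B\<in>sets borel. \<forall>y. emeasure \<gamma> (B \<times> {y}) =
                  ennreal (\<integral>x. indicator (fstar -` B) x * K x y \<partial>MX)"
  proof (intro ballI allI)
    fix B :: "(real^'k) set" and y :: 'k assume B: "B \<in> sets borel"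
    have pre: "fstar -` B \<in> sets MX" using measurable_sets[OF fsm B] spMX by simp
    have BY: "B \<times> {y} \<in> sets (borel \<Otimes>\<^sub>M count_space UNIV)" using B by simp
    have preP: "(fstar -` B) \<times> {y} \<in> sets P" unfolding P_def using pre by simp
    have "emeasure \<gamma> (B \<times> {y}) = emeasure D ((\<lambda>z. (fstar (fst z), snd z)) -` (B \<times> {y}) \<inter> space D)"
      unfolding \<gamma>_def by (rule emeasure_distr[OF Tm BY])
    also have "(\<lambda>z. (fstar (fst z), snd z)) -` (B \<times> {y}) \<inter> space D = (fstar -` B) \<times> {y}"
      unfolding D_def by (auto simp: spP)
    also have "emeasure D ((fstar -` B) \<times> {y}) = (\<integral>\<^sup>+z. ennreal (K (fst z) (snd z)) * indicator ((fstar -` B) \<times> {y}) z \<partial>P)"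
      unfolding D_def using preP dm by (subst emeasure_density) auto
    also have "\<dots> = (\<integral>\<^sup>+x. \<integral>\<^sup>+j. ennreal (K (fst (x,j)) (snd (x,j))) * indicator ((fstar -` B) \<times> {y}) (x,j) \<partial>count_space UNIV \<partial>MX)"
    proof -
      have "(\<lambda>z. ennreal (K (fst z) (snd z)) * indicator ((fstar -` B) \<times> {y}) z) \<in> borel_measurable P"
        using dm borel_measurable_indicator[OF preP] by (intro borel_measurable_times_ennreal) auto
      then show ?thesis unfolding P_def
        by (intro sigma_finite_measure.nn_integral_fst[symmetric] sigma_finite_measure_count_space_finite) auto
    qed
    also have "\<dots> = (\<integral>\<^sup>+x. ennreal (indicator (fstar -` B) x * K x y) \<partial>MX)"
    proof (rule nn_integral_cong)
      fix x
      have "(\<integral>\<^sup>+j. ennreal (K (fst (x,j)) (snd (x,j))) * indicator ((fstar -` B) \<times> {y}) (x,j) \<partial>count_space UNIV)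
         = (\<Sum>j\<in>UNIV. ennreal (K x j) * indicator ((fstar -` B) \<times> {y}) (x,j))"
        by (simp add: nn_integral_count_space_finite)
      also have "\<dots> = (\<Sum>j\<in>UNIV. if j = y then ennreal (K x y) * indicator (fstar -` B) x else 0)"
        by (rule sum.cong) (auto simp: indicator_def)
      also have "\<dots> = ennreal (indicator (fstar -` B) x * K x y)"
        by (simp add: indicator_def)
      finally show "(\<integral>\<^sup>+j. ennreal (K (fst (x,j)) (snd (x,j))) * indicator ((fstar -` B) \<times> {y}) (x,j) \<partial>count_space UNIV)
         = ennreal (indicator (fstar -` B) x * K x y)" .
    qed
    also have "\<dots> = ennreal (\<integral>x. indicator (fstar -` B) x * K x y \<partial>MX)"
    proof (rule nn_integral_eq_integral)
      have im: "(\<lambda>x. indicator (fstar -` B) x :: real) \<in> borel_measurable MX"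
        using borel_measurable_indicator[OF pre] by simp
      show "integrable MX (\<lambda>x. indicator (fstar -` B) x * K x y)"
      proof (rule MX.integrable_const_bound[where B=1])
        show "AE x in MX. norm (indicator (fstar -` B) x * K x y) \<le> 1"
          by (auto simp: indicator_def K0 Kle)
      qed (rule borel_measurable_times[OF im Km])
    qed (auto simp: K0)
    finally show "emeasure \<gamma> (B \<times> {y}) = ennreal (\<integral>x. indicator (fstar -` B) x * K x y \<partial>MX)" .
  qed
  ultimately show ?thesis by blast
qed


lemma part2_aux:
  fixes \<mu> :: "('x::polish_space \<times> 'k::finite) measure"
    and fstar :: "'x \<Rightarrow> real^'k" and q :: "'k pmf"
  assumes prob: "prob_space \<mu>"
    and sets_mu: "sets \<mu> = sets (borel \<Otimes>\<^sub>M count_space UNIV)"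
    and fstar_meas: "fstar \<in> borel_measurable (distr \<mu> borel fst)"
    and fstar_simplex: "\<forall>x. fstar x \<in> prob_simplex"
    and fstar_condexp: "\<forall>A\<in>sets borel. \<forall>i.
          (\<integral>x. indicator A x * fstar x $ i \<partial>(distr \<mu> borel fst)) = measure \<mu> (A \<times> {i})"
    and H: "\<gamma> \<in> couplings (distr (distr \<mu> borel fst) borel fstar) (measure_pmf q) \<and>
        markov_kernel_fin borel \<kappa> \<and>
        (\<forall>B\<in>sets borel. \<forall>y. emeasure \<gamma> (B \<times> {y}) =
            ennreal (\<integral>s. indicator B s * \<kappa> s y \<partial>(distr (distr \<mu> borel fst) borel fstar)))"
  shows "pushforward_eq (distr \<mu> borel fst) (\<lambda>x. \<kappa> (fstar x)) q"
    and "err \<mu> (\<lambda>x. \<kappa> (fstar x)) = half_l1_cost \<gamma>"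
proof -
  define MX where "MX = distr \<mu> borel fst"
  have cpl: "\<gamma> \<in> couplings (distr MX borel fstar) (measure_pmf q)" using H unfolding MX_def by blast
  have mk: "markov_kernel_fin borel \<kappa>" using H by blast
  have rect0: "\<forall>B\<in>sets borel. \<forall>y. emeasure \<gamma> (B \<times> {y}) =
            ennreal (\<integral>s. indicator B s * \<kappa> s y \<partial>(distr MX borel fstar))" using H unfolding MX_def by blast
  have fsm: "fstar \<in> MX \<rightarrow>\<^sub>M borel" using fstar_meas unfolding MX_def .
  have km: "\<And>y. (\<lambda>s. \<kappa> s y) \<in> borel_measurable borel" using mk unfolding markov_kernel_fin_def by auto
  have k0: "\<And>s y. 0 \<le> \<kappa> s y" using mk unfolding markov_kernel_fin_def by auto
  have mkK: "markov_kernel_fin MX (\<lambda>x. \<kappa> (fstar x))"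
    using measurable_compose[OF fsm] mk unfolding markov_kernel_fin_def by auto
  have sets_r: "sets (distr MX borel fstar \<Otimes>\<^sub>M measure_pmf q) = sets (borel \<Otimes>\<^sub>M count_space UNIV)"
    by (rule sets_pair_measure_cong) simp_all
  have sg: "sets \<gamma> = sets (borel \<Otimes>\<^sub>M count_space UNIV)" using cpl sets_r unfolding couplings_def by simp
  have rect: "\<forall>B\<in>sets borel. \<forall>y. emeasure \<gamma> (B \<times> {y}) =
                  ennreal (\<integral>x. indicator (fstar -` B) x * \<kappa> (fstar x) y \<partial>MX)"
  proof (intro ballI allI)
    fix B :: "(real^'k) set" and y assume B: "B \<in> sets borel"
    have "(\<integral>s. indicator B s * \<kappa> s y \<partial>(distr MX borel fstar)) = (\<integral>x. indicator B (fstar x) * \<kappa> (fstar x) y \<partial>MX)"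
      using B km by (intro integral_distr[OF fsm]) auto
    then show "emeasure \<gamma> (B \<times> {y}) = ennreal (\<integral>x. indicator (fstar -` B) x * \<kappa> (fstar x) y \<partial>MX)"
      using rect0 B by (simp add: indicator_vimage)
  qed
  note M = main[OF prob sets_mu fstar_meas fstar_simplex fstar_condexp mkK[unfolded MX_def] sg rect[unfolded MX_def]]
  show "err \<mu> (\<lambda>x. \<kappa> (fstar x)) = half_l1_cost \<gamma>" by (rule M(3))
  have spg: "space \<gamma> = UNIV" using sets_eq_imp_space_eq[OF sg] by (simp add: space_pair_measure)
  have sng: "snd \<in> \<gamma> \<rightarrow>\<^sub>M measure_pmf q"
    unfolding measurable_cong_sets[OF sg sets_measure_pmf_count_space] by simp
  have dq: "distr \<gamma> (measure_pmf q) snd = measure_pmf q" using cpl unfolding couplings_def by simp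
  show "pushforward_eq (distr \<mu> borel fst) (\<lambda>x. \<kappa> (fstar x)) q"
    unfolding pushforward_eq_def
  proof
    fix j
    have "snd -` {j} \<inter> space \<gamma> = UNIV \<times> {j}" using spg by auto
    then have "emeasure \<gamma> (UNIV \<times> {j}) = emeasure (distr \<gamma> (measure_pmf q) snd) {j}"
      using emeasure_distr[OF sng, of "{j}"] by simp
    also have "\<dots> = ennreal (pmf q j)" using dq by (simp add: emeasure_pmf_single)
    finally have "ennreal (\<integral>x. \<kappa> (fstar x) j \<partial>(distr \<mu> borel fst)) = ennreal (pmf q j)"
      using M(2) by simp
    then show "(\<integral>x. \<kappa> (fstar x) j \<partial>(distr \<mu> borel fst)) = pmf q j"
      by (subst (asm) ennreal_inj) (auto intro: integral_nonneg_AE simp: k0)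
  qed
qed

theorem lemma3p2:
  fixes \<mu> :: "('x::polish_space \<times> 'k::finite) measure"
    and fstar :: "'x \<Rightarrow> real^'k"
    and q :: "'k pmf"
  assumes k2: "CARD('k) \<ge> 2"
    and prob: "prob_space \<mu>"
    and sets_mu: "sets \<mu> = sets (borel \<Otimes>\<^sub>M count_space UNIV)"
    and fstar_meas: "fstar \<in> borel_measurable (distr \<mu> borel fst)"
    and fstar_simplex: "\<forall>x. fstar x \<in> prob_simplex"
    and fstar_condexp: "\<forall>A\<in>sets borel. \<forall>i.
          (\<integral>x. indicator A x * fstar x $ i \<partial>(distr \<mu> borel fst)) = measure \<mu> (A \<times> {i})"
  shows
    "(\<forall>K. markov_kernel_fin (distr \<mu> borel fst) K \<and> pushforward_eq (distr \<mu> borel fst) K q \<longrightarrow>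
        (\<exists>\<gamma>. sets \<gamma> = sets (borel \<Otimes>\<^sub>M count_space UNIV) \<and>
              (\<forall>B\<in>sets borel. \<forall>y. emeasure \<gamma> (B \<times> {y}) =
                  ennreal (\<integral>x. indicator (fstar -` B) x * K x y \<partial>(distr \<mu> borel fst)))) \<and>
        (\<forall>\<gamma>. sets \<gamma> = sets (borel \<Otimes>\<^sub>M count_space UNIV) \<and>
              (\<forall>B\<in>sets borel. \<forall>y. emeasure \<gamma> (B \<times> {y}) =
                  ennreal (\<integral>x. indicator (fstar -` B) x * K x y \<partial>(distr \<mu> borel fst)))
           \<longrightarrow> \<gamma> \<in> couplings (distr (distr \<mu> borel fst) borel fstar) (measure_pmf q) \<and>
               err \<mu> K = half_l1_cost \<gamma>))
     \<and>
     (\<forall>\<gamma> \<kappa>. \<gamma> \<in> couplings (distr (distr \<mu> borel fst) borel fstar) (measure_pmf q) \<and>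
        markov_kernel_fin borel \<kappa> \<and>
        (\<forall>B\<in>sets borel. \<forall>y. emeasure \<gamma> (B \<times> {y}) =
            ennreal (\<integral>s. indicator B s * \<kappa> s y \<partial>(distr (distr \<mu> borel fst) borel fstar)))
      \<longrightarrow> markov_kernel_fin (distr \<mu> borel fst) (\<lambda>x. \<kappa> (fstar x)) \<and>
          pushforward_eq (distr \<mu> borel fst) (\<lambda>x. \<kappa> (fstar x)) q \<and>
          err \<mu> (\<lambda>x. \<kappa> (fstar x)) = half_l1_cost \<gamma>)"
  proof -
  have fmu: "fst \<in> \<mu> \<rightarrow>\<^sub>M borel" unfolding measurable_cong_sets[OF sets_mu refl] by simp
  have MXprob: "prob_space (distr \<mu> borel fst)" by (rule prob_space.prob_space_distr[OF prob fmu])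
  have setsMX: "sets (distr \<mu> borel fst) = sets borel" by simp
  have setsC: "sets (distr (distr \<mu> borel fst) borel fstar \<Otimes>\<^sub>M measure_pmf q) = sets (borel \<Otimes>\<^sub>M count_space UNIV)"
    by (rule sets_pair_measure_cong) simp_all
  show ?thesis
  apply (intro conjI allI impI)
  subgoal for K
    using exists_gamma[OF MXprob setsMX fstar_meas, of K] by blast
  subgoal for K \<gamma>
  proof -
    assume H: "markov_kernel_fin (distr \<mu> borel fst) K \<and> pushforward_eq (distr \<mu> borel fst) K q"
      and G: "sets \<gamma> = sets (borel \<Otimes>\<^sub>M count_space UNIV) \<and>
              (\<forall>B\<in>sets borel. \<forall>y. emeasure \<gamma> (B \<times> {y}) =
                  ennreal (\<integral>x. indicator (fstar -` B) x * K x y \<partial>(distr \<mu> borel fst)))"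
    note M = main[OF prob sets_mu fstar_meas fstar_simplex fstar_condexp conjunct1[OF H] conjunct1[OF G] conjunct2[OF G]]
    have "\<forall>j. emeasure \<gamma> (UNIV \<times> {j}) = ennreal (pmf q j)"
      using M(2) conjunct2[OF H] unfolding pushforward_eq_def by simp
    then have "distr \<gamma> (measure_pmf q) snd = measure_pmf q"
      by (rule snd_marg[OF conjunct1[OF G]])
    then show ?thesis unfolding couplings_def using M(1) conjunct1[OF G] setsC by simp
  qed
  subgoal for K \<gamma>
    using main[OF prob sets_mu fstar_meas fstar_simplex fstar_condexp] by blast
  subgoal for \<gamma> \<kappa>
    using measurable_compose[OF fstar_meas] unfolding markov_kernel_fin_def by auto
  subgoal for \<gamma> \<kappa>
  proof -
    assume H: "\<gamma> \<in> couplings (distr (distr \<mu> borel fst) borel fstar) (measure_pmf q) \<and>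
        markov_kernel_fin borel \<kappa> \<and>
        (\<forall>B\<in>sets borel. \<forall>y. emeasure \<gamma> (B \<times> {y}) =
            ennreal (\<integral>s. indicator B s * \<kappa> s y \<partial>(distr (distr \<mu> borel fst) borel fstar)))"
    note P = part2_aux[OF prob sets_mu fstar_meas fstar_simplex fstar_condexp H]
    show ?thesis using P by blast
  qed
  subgoal for \<gamma> \<kappa>
  proof -
    assume H: "\<gamma> \<in> couplings (distr (distr \<mu> borel fst) borel fstar) (measure_pmf q) \<and>
        markov_kernel_fin borel \<kappa> \<and>
        (\<forall>B\<in>sets borel. \<forall>y. emeasure \<gamma> (B \<times> {y}) =
            ennreal (\<integral>s. indicator B s * \<kappa> s y \<partial>(distr (distr \<mu> borel fst) borel fstar)))"
    note P = part2_aux[OF prob sets_mu fstar_meas fstar_simplex fstar_condexp H]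
    show ?thesis using P by blast
  qed
  done
qed

end
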